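(* Let $\beta\in\mathbb{F}_{p^m}\setminus\{0\}$ and let $\mathcal{C}=\left\langle\left(x^2+\gamma x+\frac{\gamma^2}{2}\right)^i\left(x^2-\gamma x+\frac{\gamma^2}{2}\right)^j\right\rangle$, $0\le i,j\le 2p^s$, be an $(\alpha+\beta u)$-constacyclic code of length $4p^s$ over $R$. Then its dual code, viewed as an ideal of $R[x]/\langle x^{4p^s}-(\alpha+\beta u)^{-1}\rangle$, is $$\mathcal{C}^{\perp}=\left\langle\left(x^2+2\gamma^{-1}x+\tfrac{2}{\gamma^2}\right)^{2p^s-i}\left(x^2-2\gamma^{-1}x+\tfrac{2}{\gamma^2}\right)^{2p^s-j}\right\rangle.$$
   Context: Let $p$ be an odd prime and $m,s$ positive integers with $p^m\equiv 3\pmod 4$; $\mathbb{F}_{p^m}$ is the field with $p^m$ elements and $R=\mathbb{F}_{p^m}[u]/\langle u^2\rangle$. Fix $\alpha\in\mathbb{F}_{p^m}\setminus\{0\}$ that is not a square in $\mathbb{F}_{p^m}$, let $\alpha_0\in\mathbb{F}_{p^m}$ satisfy $\alpha_0^{p^s}=\alpha$, and let $\gamma\in\mathbb{F}_{p^m}$ satisfy $\gamma^4+4\alpha_0=0$. A $\lambda$-constacyclic code of length $n$ over $R$ ($\lambda$ a unit) is identified with an ideal of $R[x]/\langle x^n-\lambda\rangle$ via $(c_0,\dots,c_{n-1})\mapsto\sum c_ix^i$. The dual code is $\mathcal{C}^\perp=\{a\in R^n: \sum_k a_kc_k=0\ \forall c\in\mathcal{C}\}$, which is a $\lambda^{-1}$-constacyclic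 code and hence identified with an ideal of $R[x]/\langle x^n-\lambda^{-1}\rangle$. *)

theory Defs
  imports "HOL-Computational_Algebra.Polynomial"
begin

text \<open>An element a + b u of F[u]/<u^2> is represented as Dual a b.\<close>

datatype 'a dual = Dual (re: 'a) (du: 'a)

instantiation dual :: (comm_ring_1) comm_ring_1
begin
definition "0 = Dual 0 0"
definition "1 = Dual 1 0"
definition "x + y = Dual (re x + re y) (du x + du y)"
definition "x - y = Dual (re x - re y) (du x - du y)"
definition "- x = Dual (- re x) (- du x)"
definition "x * y = Dual (re x * re y) (re x * du y + du x * re y)"
instance
  by standard
     (auto simp: zero_dual_def one_dual_def plus_dual_def minus_dual_def
                 uminus_dual_def times_dual_def algebra_simps intro: dual.expand)
end

definition dconst :: "'a::comm_ring_1 \<Rightarrow> 'a dual" where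
  "dconst a = Dual a 0"

definition uu :: "'a::comm_ring_1 dual" where
  "uu = Dual 0 1"

definition dinv :: "'a::field dual \<Rightarrow> 'a dual" where
  "dinv x = Dual (inverse (re x)) (- du x * inverse (re x) ^ 2)"

text \<open>The ideal generated by g in R[x]/<x^n - lam>, viewed as a set of words of length n
  (identified with polynomials of degree < n, i.e. canonical representatives).\<close>
definition constacyclic_ideal ::
  "nat \<Rightarrow> 'a::comm_ring_1 \<Rightarrow> 'a poly \<Rightarrow> 'a list set" where
  "constacyclic_ideal n lam g =
     {c. length c = n \<and> (\<exists>f q. Poly c = g * f + q * (monom 1 n - [:lam:]))}"

definition dual_code :: "nat \<Rightarrow> 'a::comm_ring_1 list set \<Rightarrow> 'a list set" where
  "dual_code n C = {a. length a = n \<and> (\<forall>c\<in>C. (\<Sum>k<n. a ! k * c ! k) = 0)}"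

end

theory Submission imports Defs "HOL-Number_Theory.Residues" begin
hide_const (open) UnivPoly.monom UnivPoly.coeff Module.smult
lemma dual_eq_iff: "x = y \<longleftrightarrow> re x = re y \<and> du x = du y"
  by (cases x; cases y) auto

lemma re_0[simp]: "re 0 = 0" and du_0[simp]: "du 0 = 0"
  and re_1[simp]: "re 1 = 1" and du_1[simp]: "du 1 = 0"
  by (simp_all add: zero_dual_def one_dual_def)

lemma re_plus[simp]: "re (x + y) = re x + re y" and du_plus[simp]: "du (x + y) = du x + du y"
  and re_minus[simp]: "re (x - y) = re x - re y" and du_minus[simp]: "du (x - y) = du x - du y"
  and re_uminus[simp]: "re (- x) = - re x" and du_uminus[simp]: "du (- x) = - du x"
  and re_times[simp]: "re (x * y) = re x * re y" and du_times[simp]: "du (x * y) = re x * du y + du x * re y"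
  by (simp_all add: plus_dual_def minus_dual_def uminus_dual_def times_dual_def)

lemma re_dconst[simp]: "re (dconst a) = a" and du_dconst[simp]: "du (dconst a) = 0"
  by (simp_all add: dconst_def)
lemma re_uu[simp]: "re uu = 0" and du_uu[simp]: "du uu = 1"
  by (simp_all add: uu_def)

lemma dconst_0[simp]: "dconst 0 = 0" and dconst_1[simp]: "dconst 1 = 1"
  and dconst_add: "dconst (a + b) = dconst a + dconst b"
  and dconst_diff: "dconst (a - b) = dconst a - dconst b"
  and dconst_uminus: "dconst (- a) = - dconst a"
  and dconst_mult: "dconst (a * b) = dconst a * dconst b"
  by (simp_all add: dual_eq_iff)

lemma uu_sq[simp]: "uu * uu = (0::'a::comm_ring_1 dual)"
  by (simp add: dual_eq_iff)

definition Kp :: "nat \<Rightarrow> 'a \<Rightarrow> 'a::comm_ring_1 poly" where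
  "Kp n l = monom 1 n - [:l:]"

definition redK :: "nat \<Rightarrow> 'a \<Rightarrow> 'a::comm_ring_1 poly \<Rightarrow> 'a poly" where
  "redK n l P = (\<Sum>k\<le>degree P. monom (coeff P k * l ^ (k div n)) (k mod n))"

lemma coeff_redK: "coeff (redK n l P) j =
   (\<Sum>k\<le>degree P. if k mod n = j then coeff P k * l ^ (k div n) else 0)"
  unfolding redK_def coeff_sum by (intro sum.cong) auto

lemma coeff_redK_high: "0 < n \<Longrightarrow> n \<le> j \<Longrightarrow> coeff (redK n l P) j = 0"
  unfolding coeff_redK by (intro sum.neutral) (metis (no_types) leD mod_less_divisor)

lemma redK_0[simp]: "redK n l 0 = 0"
  by (simp add: redK_def)

lemma const_poly_power: "[:a:] ^ q = [:a ^ q:]"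
  by (induction q) (auto simp: mult.commute)

lemma Kp_dvd_pow: "Kp n l dvd monom 1 (n * q) - [:l ^ q:]"
proof -
  have "monom 1 (n * q) - [:l ^ q:] = (monom 1 n) ^ q - [:l:] ^ q"
    by (simp add: monom_power const_poly_power)
  also have "\<dots> = Kp n l * (\<Sum>i<q. [:l:]^(q - Suc i) * (monom 1 n)^i)"
    unfolding Kp_def by (rule power_diff_sumr2)
  finally show ?thesis by simp
qed

lemma redK_dvd: "Kp n l dvd P - redK n l P"
proof -
  have "P - redK n l P = (\<Sum>k\<le>degree P. monom (coeff P k) k - monom (coeff P k * l ^ (k div n)) (k mod n))"
    unfolding redK_def sum_subtractf by (simp add: poly_as_sum_of_monoms)
  also have "Kp n l dvd \<dots>"
  proof (rule dvd_sum)
    fix k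
    have "monom (coeff P k) k - monom (coeff P k * l ^ (k div n)) (k mod n)
        = monom (coeff P k) (k mod n) * (monom 1 (n * (k div n)) - [:l ^ (k div n):])"
    proof -
      have e1: "monom (coeff P k) k = monom (coeff P k) (k mod n) * monom 1 (n*(k div n))"
        by (simp add: mult_monom mod_mult_div_eq)
      have e2: "monom (coeff P k * l ^ (k div n)) (k mod n) = monom (coeff P k) (k mod n) * [:l ^ (k div n):]"
        by (simp add: mult_monom flip: monom_0)
      show ?thesis unfolding e1 e2 by (simp add: right_diff_distrib)
    qed
    then show "Kp n l dvd monom (coeff P k) k - monom (coeff P k * l ^ (k div n)) (k mod n)"
      using Kp_dvd_pow by (metis dvd_mult)
  qed
  finally show ?thesis .
qed

lemma coeff_Kp: "0 < n \<Longrightarrow> coeff (Kp n l) j = (if j = n then 1 else if j = 0 then - l else 0)"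
  unfolding Kp_def by (auto simp: coeff_pCons split: nat.split)

lemma degree_Kp: "0 < n \<Longrightarrow> degree (Kp n l) = n"
  by (intro antisym degree_le le_degree) (auto simp: coeff_Kp)

lemma Kp_mult_coeff_top: "0 < n \<Longrightarrow> q \<noteq> 0 \<Longrightarrow> coeff (Kp n l * q) (n + degree q) \<noteq> 0"
  using coeff_mult_degree_sum[of "Kp n l" q] by (simp add: degree_Kp coeff_Kp)

lemma Kp_dvd_low:
  assumes "0 < n" "Kp n l dvd P" "\<forall>j\<ge>n. coeff P j = 0"
  shows "P = 0"
proof -
  from assms(2) obtain q where q: "P = Kp n l * q" by (auto elim: dvdE)
  show ?thesis
  proof (cases "q = 0")
    case False
    then have "coeff P (n + degree q) \<noteq> 0" using q Kp_mult_coeff_top assms(1) by auto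
    then show ?thesis using assms(3)[rule_format, of "n + degree q"] by simp
  qed (use q in simp)
qed

lemma redK_cong:
  assumes "0 < n" "Kp n l dvd P1 - P2"
  shows "redK n l P1 = redK n l P2"
proof -
  have e: "redK n l P1 - redK n l P2 = (P2 - redK n l P2) - (P1 - redK n l P1) + (P1 - P2)"
    by (simp add: algebra_simps)
  have "Kp n l dvd redK n l P1 - redK n l P2"
    unfolding e by (rule dvd_add[OF dvd_diff[OF redK_dvd redK_dvd] assms(2)])
  moreover have "\<forall>j\<ge>n. coeff (redK n l P1 - redK n l P2) j = 0"
    by (auto simp: coeff_redK_high[OF assms(1)])
  ultimately have "redK n l P1 - redK n l P2 = 0"
    by (rule Kp_dvd_low[OF assms(1)])
  then show ?thesis by simp
qed

lemma redK_low:
  assumes n: "0 < n" and hi: "\<forall>j\<ge>2*n-1. coeff P j = 0"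
  shows "coeff (redK n l P) (n-1) = coeff P (n-1)"
proof -
  have "coeff (redK n l P) (n-1) = (\<Sum>k\<le>degree P. if k = n - 1 then coeff P k else 0)"
    unfolding coeff_redK
  proof (intro sum.cong refl)
    fix k assume "k \<in> {..degree P}"
    show "(if k mod n = n - 1 then coeff P k * l ^ (k div n) else 0) = (if k = n - 1 then coeff P k else 0)"
    proof (cases "coeff P k = 0")
      case False
      then have "k < 2*n - 1" using hi by (meson not_le)
      then have kd: "k div n < 2" using n by (simp add: less_mult_imp_div_less)
      have "k mod n = n - 1 \<longleftrightarrow> k = n - 1"
      proof
        assume a: "k mod n = n - 1"
        have "k div n \<noteq> 1"
        proof
          assume h: "k div n = 1"
          have "k = k div n * n + k mod n" by (rule div_mult_mod_eq[symmetric])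
          also have "\<dots> = n + (n - 1)" using h a by simp
          finally show False using \<open>k < 2*n-1\<close> by linarith
        qed
        with kd have "k div n = 0" by linarith
        then have "k = k mod n" using div_mult_mod_eq[of k n] by simp
        with a show "k = n - 1" by simp
      next
        assume "k = n - 1" then show "k mod n = n - 1" using n by simp
      qed
      moreover have "k = n - 1 \<Longrightarrow> k div n = 0" using n by simp
      ultimately show ?thesis by auto
    qed auto
  qed
  also have "\<dots> = coeff P (n - 1)"
    by (cases "n - 1 \<le> degree P") (simp_all add: coeff_eq_0)
  finally show ?thesis .
qed

lemma shift_coeff:
  assumes n: "0 < n" and r: "\<forall>j\<ge>n. coeff r j = 0" and k: "k < n"
  shows "coeff (redK n l (monom 1 k * r)) (n-1) = coeff r (n-1-k)"
proof -
  have "\<forall>j\<ge>2*n-1. coeff (monom 1 k * r) j = 0"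
    using r k by (auto simp: coeff_monom_mult)
  then have "coeff (redK n l (monom 1 k * r)) (n-1) = coeff (monom 1 k * r) (n-1)"
    using redK_low n by blast
  also have "\<dots> = coeff r (n-1-k)" using k by (simp add: coeff_monom_mult)
  finally show ?thesis .
qed

lemma X_cancel1:
  assumes lm: "l * m = 1" and n: "0 < n" and d: "Kp n m dvd monom 1 1 * P"
  shows "Kp n m dvd P"
proof -
  have "monom 1 (n-1) * (monom 1 1 * P) = (monom 1 (n-1) * monom 1 1) * P"
    by (rule mult.assoc[symmetric])
  also have "monom 1 (n-1) * monom 1 1 = (monom 1 n :: 'a poly)" using n by (simp add: mult_monom)
  finally have "Kp n m dvd monom 1 n * P" using d by (metis dvd_mult)
  then have "Kp n m dvd monom 1 n * P - Kp n m * P" by (rule dvd_diff) simp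
  also have "monom 1 n * P - Kp n m * P = [:m:] * P" by (simp add: Kp_def left_diff_distrib)
  finally have h: "Kp n m dvd [:m:] * P" .
  have "Kp n m dvd smult l ([:m:] * P)" by (rule dvd_smult[OF h])
  also have "smult l ([:m:] * P) = P" using lm by simp
  finally show ?thesis .
qed

lemma X_cancel:
  assumes lm: "l * m = 1" and n: "0 < n"
  shows "Kp n m dvd monom 1 k * P \<Longrightarrow> Kp n m dvd P"
proof (induction k arbitrary: P)
  case (Suc k)
  have "monom 1 (Suc k) * P = (monom 1 k * monom 1 1) * P"
    by (simp add: mult_monom)
  also have "\<dots> = monom 1 k * (monom 1 1 * P)" by (rule mult.assoc)
  finally have "Kp n m dvd monom 1 k * (monom 1 1 * P)" using Suc.prems by simp
  then have "Kp n m dvd monom 1 1 * P" by (rule Suc.IH)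
  then show ?case using X_cancel1[OF lm n] by blast
qed simp

lemma pair_coeff:
  assumes "length a = n" "length c = n" "0 < n"
  shows "coeff (Poly a * Poly (rev c)) (n-1) = (\<Sum>k<n. a!k * c!k)"
proof -
  have "coeff (Poly a * Poly (rev c)) (n-1) = (\<Sum>i\<le>n-1. nth_default 0 a i * nth_default 0 (rev c) (n-1-i))"
    by (simp add: coeff_mult)
  also have "{..n-1} = {..<n}" using assms(3) by auto
  also have "(\<Sum>i<n. nth_default 0 a i * nth_default 0 (rev c) (n-1-i)) = (\<Sum>k<n. a!k * c!k)"
  proof (intro sum.cong refl)
    fix i assume i: "i \<in> {..<n}"
    then have "nth_default 0 (rev c) (n-1-i) = c ! i"
      using assms by (auto simp: nth_default_def rev_nth)
    then show "nth_default 0 a i * nth_default 0 (rev c) (n-1-i) = a!i * c!i"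
      using i assms by (auto simp: nth_default_def)
  qed
  finally show ?thesis .
qed

lemma coeff_Poly_high: "length xs \<le> j \<Longrightarrow> coeff (Poly xs) j = 0"
  by (simp add: nth_default_def)

lemma pair_high:
  assumes "length a = n" "length c = n" "0 < n"
  shows "\<forall>j\<ge>2*n-1. coeff (Poly a * Poly c) j = 0"
proof -
  have "degree (Poly a) \<le> n - 1" "degree (Poly c) \<le> n - 1"
    using assms by (auto intro!: degree_le coeff_Poly_high)
  then have "degree (Poly a * Poly c) \<le> 2*n - 2"
    using degree_mult_le[of "Poly a" "Poly c"] by linarith
  then show ?thesis using assms(3) by (intro allI impI coeff_eq_0) linarith
qed

definition rho :: "nat \<Rightarrow> 'a::comm_ring_1 poly \<Rightarrow> 'a poly" where
  "rho a P = (\<Sum>k<a. monom (coeff P k) (a - 1 - k))"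

lemma coeff_rho: "coeff (rho a P) j = (if j < a then coeff P (a - 1 - j) else 0)"
proof -
  have "coeff (rho a P) j = (\<Sum>k<a. if a - 1 - k = j then coeff P k else 0)"
    unfolding rho_def coeff_sum by (intro sum.cong) auto
  also have "\<dots> = (if j < a then coeff P (a - 1 - j) else 0)"
  proof (cases "j < a")
    case True
    have "(\<Sum>k<a. if a - 1 - k = j then coeff P k else 0) = (\<Sum>k<a. if k = a - 1 - j then coeff P k else 0)"
      using True by (intro sum.cong) auto
    then show ?thesis using True by simp
  next
    case False
    then show ?thesis by (auto intro: sum.neutral)
  qed
  finally show ?thesis .
qed

lemma rho_add: "rho a (P + Q) = rho a P + rho a Q"
  by (rule poly_eqI) (simp add: coeff_rho)
lemma rho_diff: "rho a (P - Q) = rho a P - rho a Q"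
  by (rule poly_eqI) (simp add: coeff_rho)
lemma rho_0[simp]: "rho a 0 = 0"
  by (rule poly_eqI) (simp add: coeff_rho)
lemma rho_sum: "rho a (sum f S) = (\<Sum>s\<in>S. rho a (f s))"
  by (induction S rule: infinite_finite_induct) (auto simp: rho_add)

lemma rho_high: "\<forall>j\<ge>a. coeff (rho a P) j = 0"
  by (simp add: coeff_rho)

lemma rho_rho: "\<forall>j\<ge>a. coeff P j = 0 \<Longrightarrow> rho a (rho a P) = P"
  by (rule poly_eqI) (auto simp: coeff_rho)

lemma rho_extend:
  assumes "\<forall>j\<ge>a. coeff P j = 0" "a \<le> M"
  shows "rho M P = monom 1 (M - a) * rho a P"
proof (rule poly_eqI)
  fix j
  show "coeff (rho M P) j = coeff (monom 1 (M - a) * rho a P) j"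
    using assms by (auto simp: coeff_rho coeff_monom_mult)
qed

lemma rho_Poly: "length c = n \<Longrightarrow> rho n (Poly c) = Poly (rev c)"
  by (rule poly_eqI) (auto simp: coeff_rho nth_default_def rev_nth)

lemma rho_monom: "k < a \<Longrightarrow> rho a (monom p k) = monom p (a - 1 - k)"
  by (rule poly_eqI) (auto simp: coeff_rho)

lemma rho_mult:
  assumes P: "\<forall>j\<ge>a. coeff P j = 0" and Q: "\<forall>j\<ge>b. coeff Q j = 0" and "0 < a" "0 < b"
  shows "rho (a + b - 1) (P * Q) = rho a P * rho b Q"
proof -
  have dP: "degree P \<le> a - 1" using P by (intro degree_le) auto
  have dQ: "degree Q \<le> b - 1" using Q by (intro degree_le) auto
  have eP: "P = (\<Sum>i\<le>a-1. monom (coeff P i) i)" using poly_as_sum_of_monoms'[OF dP] by simp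
  have eQ: "Q = (\<Sum>i\<le>b-1. monom (coeff Q i) i)" using poly_as_sum_of_monoms'[OF dQ] by simp
  have mono: "rho (a + b - 1) (monom (coeff P i) i * monom (coeff Q k) k)
      = rho a (monom (coeff P i) i) * rho b (monom (coeff Q k) k)" if "i \<le> a - 1" "k \<le> b - 1" for i k
    using that assms(3,4) by (simp add: mult_monom rho_monom)
  have "rho (a + b - 1) (P * Q) = rho (a + b - 1) (\<Sum>i\<le>a-1. \<Sum>k\<le>b-1. monom (coeff P i) i * monom (coeff Q k) k)"
    by (subst eP, subst eQ) (simp add: sum_product)
  also have "\<dots> = (\<Sum>i\<le>a-1. \<Sum>k\<le>b-1. rho a (monom (coeff P i) i) * rho b (monom (coeff Q k) k))"
    unfolding rho_sum by (intro sum.cong refl mono) auto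
  also have "\<dots> = rho a P * rho b Q"
    by (subst (2) eP, subst (2) eQ) (simp add: sum_product rho_sum)
  finally show ?thesis .
qed

lemma rho_Kp:
  assumes "l * m = 1" "0 < n"
  shows "rho (n + 1) (Kp n l) = - [:l:] * Kp n m"
proof (rule poly_eqI)
  fix j
  show "coeff (rho (n + 1) (Kp n l)) j = coeff (- [:l:] * Kp n m) j"
    using assms by (auto simp: coeff_rho coeff_Kp mult.commute)
qed

lemma degree_Kp_mult:
  assumes "0 < n" "q \<noteq> 0"
  shows "degree (Kp n l * q) = n + degree q"
proof (rule antisym)
  show "degree (Kp n l * q) \<le> n + degree q"
    using degree_mult_le[of "Kp n l" q] degree_Kp[OF assms(1), of l] by simp
  show "n + degree q \<le> degree (Kp n l * q)"
    using Kp_mult_coeff_top[OF assms] by (rule le_degree)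
qed

lemma rev_lemma:
  assumes lm: "l * m = 1" and n: "0 < n" and c: "length c = n"
    and d: "Kp n l dvd Poly c - H" and H: "\<forall>j\<ge>M. coeff H j = 0" and M: "n \<le> M"
  shows "Kp n m dvd monom 1 (M - n) * Poly (rev c) - rho M H"
proof -
  obtain q where q: "Poly c - H = Kp n l * q" using d by (auto elim: dvdE)
  have Pc: "\<forall>j\<ge>n. coeff (Poly c) j = 0" using c by (auto simp: nth_default_def)
  have "rho M (Poly c) = monom 1 (M - n) * rho n (Poly c)" using Pc M by (rule rho_extend)
  then have e1: "monom 1 (M - n) * Poly (rev c) - rho M H = rho M (Poly c - H)"
    using rho_Poly[OF c] by (simp add: rho_diff)
  show ?thesis
  proof (cases "q = 0")
    case True
    then show ?thesis using e1 q by simp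
  next
    case False
    have "\<forall>j\<ge>M. coeff (Poly c - H) j = 0" using Pc H M by simp
    then have "coeff (Kp n l * q) (n + degree q) = 0 \<or> n + degree q < M"
      using q by (metis not_le)
    then have dq: "n + degree q < M" using Kp_mult_coeff_top[OF n False] by blast
    then have qh: "\<forall>j\<ge>M - n. coeff q j = 0" by (auto intro: coeff_eq_0)
    have Kh: "\<forall>j\<ge>n + 1. coeff (Kp n l) j = 0" using n by (simp add: coeff_Kp)
    have "rho M (Kp n l * q) = rho ((n + 1) + (M - n) - 1) (Kp n l * q)"
      using M by simp
    also have "\<dots> = rho (n + 1) (Kp n l) * rho (M - n) q"
      using dq by (intro rho_mult Kh qh) auto
    also have "\<dots> = Kp n m * (- [:l:] * rho (M - n) q)"
      using rho_Kp[OF lm n] by (simp add: algebra_simps)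
    finally have "monom 1 (M - n) * Poly (rev c) - rho M H = Kp n m * (- [:l:] * rho (M - n) q)"
      using e1 q by simp
    then show ?thesis by (metis dvd_triv_left)
  qed
qed

lemma X_invert:
  assumes lm: "l * m = 1" and n: "0 < n" and d: "Kp n l dvd monom 1 s * P - W"
  shows "\<exists>h. Kp n l dvd P - W * h"
proof -
  define h where "h = smult (m ^ s) (monom 1 ((n - 1) * s))"
  have mm: "monom 1 ((n - 1) * s) * monom 1 s = (monom 1 (n * s) :: 'a poly)"
    using n by (simp add: mult_monom algebra_simps)
  have lms: "m ^ s * l ^ s = 1" using lm by (simp flip: power_mult_distrib add: mult.commute)
  have "P - W * h = h * (monom 1 s * P - W) - smult (m ^ s) ((monom 1 (n * s) - [:l ^ s:]) * P)"
  proof -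
    have "monom 1 ((n-1)*s) * (monom 1 s * P) = monom 1 (n*s) * P"
      by (simp only: mult.assoc[symmetric] mm)
    then have A: "h * (monom 1 s * P) = smult (m ^ s) (monom 1 (n * s) * P)"
      by (simp add: h_def)
    have C: "smult (m ^ s) ([:l ^ s:] * P) = P" using lms by simp
    have Z: "h * (monom 1 s * P - W) - smult (m ^ s) ((monom 1 (n * s) - [:l ^ s:]) * P)
       = h * (monom 1 s * P) - h * W - (smult (m ^ s) (monom 1 (n * s) * P) - smult (m ^ s) ([:l ^ s:] * P))"
      by (simp only: right_diff_distrib left_diff_distrib smult_diff_right)
    show ?thesis unfolding Z A C by (simp add: mult.commute)
  qed
  also have "Kp n l dvd \<dots>"
    by (rule dvd_diff[OF dvd_mult[OF d] dvd_smult[OF dvd_mult2[OF Kp_dvd_pow]]])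
  finally show ?thesis by blast
qed

abbreviation dc :: "'a::comm_ring_1 poly \<Rightarrow> 'a dual poly" where
  "dc P \<equiv> map_poly dconst P"

lemma coeff_dc[simp]: "coeff (dc P) k = dconst (coeff P k)"
  by (simp add: coeff_map_poly)

lemma dc_add: "dc (P + Q) = dc P + dc Q"
  by (rule poly_eqI) (simp add: dconst_add)
lemma dc_diff: "dc (P - Q) = dc P - dc Q"
  by (rule poly_eqI) (simp add: dconst_diff)
lemma dc_minus: "dc (- P) = - dc P"
  by (rule poly_eqI) (simp add: dconst_uminus)
lemma dc_smult: "dc (smult a P) = smult (dconst a) (dc P)"
  by (rule poly_eqI) (simp add: dconst_mult)
lemma dc_pCons: "dc (pCons a P) = pCons (dconst a) (dc P)"
  by (rule poly_eqI) (simp add: coeff_pCons split: nat.split)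
lemma dc_mult: "dc (P * Q) = dc P * dc Q"
  by (induction P) (simp_all add: dc_add dc_smult dc_pCons)
lemma dc_1: "dc 1 = 1"
  by (simp add: one_pCons dc_pCons)
lemma dc_power: "dc (P ^ k) = dc P ^ k"
  by (induction k) (simp_all add: dc_mult dc_1)
lemma dc_monom: "dc (monom a k) = monom (dconst a) k"
  by (rule poly_eqI) simp
lemma dc_Kp: "dc (Kp n a) = Kp n (dconst a)"
  unfolding Kp_def by (simp add: dc_diff dc_monom dc_pCons)
lemma rho_dc: "rho a (dc P) = dc (rho a P)"
  by (rule poly_eqI) (simp add: coeff_rho)

lemma dual_decomp: "P = dc (map_poly re P) + smult uu (dc (map_poly du P))"
  by (rule poly_eqI) (simp add: coeff_map_poly dual_eq_iff)

lemma dual_decomp_unique: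
  assumes "dc A + smult uu (dc B) = dc A' + smult uu (dc B')"
  shows "A = A' \<and> B = B'"
proof -
  have "coeff A k = coeff A' k \<and> coeff B k = coeff B' k" for k
    using arg_cong[OF assms, of "\<lambda>P. coeff P k"] by (simp add: dual_eq_iff)
  then show ?thesis by (auto intro: poly_eqI)
qed

lemma Kp_dual: "Kp n (Dual a b) = dc (Kp n a) - smult uu (dc [:b:])"
  unfolding Kp_def by (rule poly_eqI) (simp add: coeff_pCons dual_eq_iff split: nat.split)

lemma uu_uu_x[simp]: "uu * (uu * x) = (0::'a::comm_ring_1 dual)"
  by (simp add: mult.assoc[symmetric])

lemma smult_uu_mult: "smult uu X * smult uu Y = (0::'a::comm_ring_1 dual poly)"
  by (simp add: mult.assoc)

lemma lemma_Z:
  fixes Q :: "'a::field poly"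
  assumes b: "b \<noteq> 0" and d: "Kp n (Dual a b) dvd dc Q"
  shows "(Kp n a)^2 dvd Q"
proof -
  obtain T where T: "dc Q = Kp n (Dual a b) * T" using d by (auto elim: dvdE)
  define T0 where "T0 = map_poly re T"
  define T1 where "T1 = map_poly du T"
  have "Kp n (Dual a b) * T = (dc (Kp n a) - smult uu (dc [:b:])) * (dc T0 + smult uu (dc T1))"
    unfolding Kp_dual T0_def T1_def by (simp flip: dual_decomp)
  also have "\<dots> = dc (Kp n a * T0) + smult uu (dc (Kp n a * T1 - smult b T0))"
    by (simp add: algebra_simps dc_mult dc_diff dc_smult smult_uu_mult dc_pCons smult_diff_right)
  finally have "dc Q + smult uu (dc 0) = dc (Kp n a * T0) + smult uu (dc (Kp n a * T1 - smult b T0))"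
    using T by simp
  from dual_decomp_unique[OF this] have 1: "Q = Kp n a * T0" and 2: "Kp n a * T1 = smult b T0"
    by auto
  have "T0 = smult (inverse b) (Kp n a * T1)" using 2 b by simp
  then have "Q = (Kp n a)^2 * smult (inverse b) T1" using 1 by (simp add: power2_eq_square mult.assoc)
  then show ?thesis by (metis dvd_triv_left)
qed

lemma Kp_dvd_dc_sq: "Kp n (Dual a b) dvd dc ((Kp n a)^2)"
proof -
  have e: "dc (Kp n a) = Kp n (Dual a b) + smult uu (dc [:b:])" by (simp add: Kp_dual)
  have "dc ((Kp n a)^2) = Kp n (Dual a b) * (Kp n (Dual a b) + 2 * smult uu (dc [:b:]))
      + smult uu (dc [:b:]) * smult uu (dc [:b:])"
    unfolding dc_power e by (simp add: power2_eq_square algebra_simps)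
  also have "\<dots> = Kp n (Dual a b) * (Kp n (Dual a b) + 2 * smult uu (dc [:b:]))"
    by (simp only: smult_uu_mult add_0_right)
  finally show ?thesis by (metis dvd_triv_left)
qed

lemma member_from_dvd:
  fixes Fs g :: "'a::field poly"
  assumes b: "b \<noteq> 0" and d: "Kp n (Dual a b) dvd P * dc Fs"
    and imp: "\<And>Pf. (Kp n a)^2 dvd Pf * Fs \<Longrightarrow> g dvd Pf"
  shows "\<exists>f q. P = dc g * f + q * Kp n (Dual a b)"
proof -
  define P0 where "P0 = map_poly re P"
  define P1 where "P1 = map_poly du P"
  define Pf where "Pf = P0 + smult (inverse b) (Kp n a * P1)"
  have P: "P = dc P0 + smult uu (dc P1)" unfolding P0_def P1_def by (rule dual_decomp)
  have ib: "dconst (inverse b) * dconst b = 1" using b by (simp flip: dconst_mult)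
  have e: "P - dc Pf = (- dc (smult (inverse b) P1)) * Kp n (Dual a b)"
  proof -
    have "(- dc (smult (inverse b) P1)) * Kp n (Dual a b)
        = - dc (smult (inverse b) (Kp n a * P1)) + smult (dconst (inverse b) * dconst b) (smult uu (dc P1))"
      unfolding Kp_dual by (simp add: algebra_simps dc_mult dc_smult dc_pCons)
    also have "\<dots> = - dc (smult (inverse b) (Kp n a * P1)) + smult uu (dc P1)"
      by (simp only: ib smult_1_left)
    also have "\<dots> = P - dc Pf"
      unfolding Pf_def by (subst P) (simp add: dc_add)
    finally show ?thesis by simp
  qed
  have "dc (Pf * Fs) = P * dc Fs - (P - dc Pf) * dc Fs"
    by (simp add: dc_mult algebra_simps)
  also have "Kp n (Dual a b) dvd \<dots>"
    using d e by (metis dvd_diff dvd_mult2 dvd_triv_right)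
  finally have "(Kp n a)^2 dvd Pf * Fs" by (rule lemma_Z[OF b])
  then obtain h where h: "Pf = g * h" using imp by (auto elim: dvdE)
  have "P = dc g * dc h + (- dc (smult (inverse b) P1)) * Kp n (Dual a b)"
    using e h by (simp add: dc_mult algebra_simps)
  then show ?thesis by blast
qed

lemma Poly_map_coeff: "\<forall>j\<ge>n. coeff p j = 0 \<Longrightarrow> Poly (map (coeff p) [0..<n]) = p"
  by (rule poly_eqI) (auto simp: nth_default_def)

lemma high_dc: "\<forall>j\<ge>a. coeff P j = 0 \<Longrightarrow> \<forall>j\<ge>a. coeff (dc P) j = 0"
  by simp

lemma abstract_dual:
  fixes fF gF Fsf :: "'a::field poly"
  assumes n: "0 < n" and a: "a \<noteq> 0" and b: "b \<noteq> 0"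
    and a0: "0 < a0" and fhigh: "\<forall>j\<ge>a0. coeff fF j = 0" and Fsf: "Fsf = rho a0 fF"
    and key: "(Kp n (inverse a))^2 dvd gF * Fsf"
    and imp: "\<And>Pf. (Kp n (inverse a))^2 dvd Pf * Fsf \<Longrightarrow> gF dvd Pf"
  shows "dual_code n (constacyclic_ideal n (Dual a b) (dc fF))
       = constacyclic_ideal n (Dual (inverse a) (- b * inverse a ^ 2)) (dc gF)"
proof -
  define l where "l = Dual a b"
  define m where "m = Dual (inverse a) (- b * inverse a ^ 2)"
  have lm: "l * m = 1" and ml: "m * l = 1"
    unfolding l_def m_def using a by (simp_all add: dual_eq_iff field_simps power2_eq_square)
  have b': "- b * inverse a ^ 2 \<noteq> 0" using a b by simp
  have CI: "constacyclic_ideal n lam g = {c. length c = n \<and> (\<exists>f q. Poly c = g * f + q * Kp n lam)}"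
    for lam :: "'a dual" and g by (simp add: constacyclic_ideal_def Kp_def)
  have fhigh': "\<forall>j\<ge>a0. coeff (dc fF) j = 0" using fhigh by simp
  have Fs: "dc Fsf = rho a0 (dc fF)" by (simp add: Fsf rho_dc)
  have keyR: "Kp n m dvd dc gF * dc Fsf"
  proof -
    from key obtain t where t: "gF * Fsf = (Kp n (inverse a))^2 * t" by (auto elim: dvdE)
    have "dc gF * dc Fsf = dc ((Kp n (inverse a))^2) * dc t" by (simp add: t flip: dc_mult)
    moreover have "Kp n m dvd dc ((Kp n (inverse a))^2)" unfolding m_def by (rule Kp_dvd_dc_sq)
    ultimately show ?thesis by simp
  qed
  show ?thesis
    unfolding l_def[symmetric] m_def[symmetric]
  proof (intro equalityI subsetI)
    fix x assume x: "x \<in> dual_code n (constacyclic_ideal n l (dc fF))"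
    then have xl: "length x = n" and orth: "\<And>c. c \<in> constacyclic_ideal n l (dc fF) \<Longrightarrow> (\<Sum>k<n. x ! k * c ! k) = 0"
      by (auto simp: dual_code_def)
    define Fs where "Fs = dc Fsf"
    define Q where "Q = Poly x * Fs"
    define r where "r = redK n m Q"
    have rhigh: "\<forall>j\<ge>n. coeff r j = 0" unfolding r_def using coeff_redK_high[OF n] by auto
    have "r = 0"
    proof (rule poly_eqI)
      fix j
      show "coeff r j = coeff 0 j"
      proof (cases "j < n")
        case False then show ?thesis using rhigh by simp
      next
        case True
        define k where "k = n - 1 - j"
        have k: "k < n" and jk: "j = n - 1 - k" using True unfolding k_def by auto
        define R2 where "R2 = redK n m (monom 1 k * Fs)"
        define w where "w = map (coeff R2) [0..<n]"
        have wl: "length w = n" by (simp add: w_def)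
        have R2h: "\<forall>j\<ge>n. coeff R2 j = 0" unfolding R2_def using coeff_redK_high[OF n] by auto
        have Pw: "Poly w = R2" unfolding w_def by (rule Poly_map_coeff[OF R2h])
        have "coeff r j = coeff (redK n m (monom 1 k * r)) (n-1)"
          using shift_coeff[OF n rhigh k] jk by simp
        also have "redK n m (monom 1 k * r) = redK n m (Poly x * Poly w)"
        proof (rule redK_cong[OF n])
          have "monom 1 k * r - Poly x * Poly w
              = Poly x * (monom 1 k * Fs - R2) - monom 1 k * (Q - r)"
            unfolding Pw Q_def by (simp add: algebra_simps)
          also have "Kp n m dvd \<dots>"
            unfolding R2_def r_def by (intro dvd_diff dvd_mult redK_dvd)
          finally show "Kp n m dvd monom 1 k * r - Poly x * Poly w" .
        qed
        also have "coeff (redK n m (Poly x * Poly w)) (n-1) = coeff (Poly x * Poly w) (n-1)"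
          by (rule redK_low[OF n pair_high[OF xl wl n]])
        also have "\<dots> = (\<Sum>t<n. x ! t * rev w ! t)"
          using pair_coeff[OF xl _ n, of "rev w"] wl by simp
        also have "\<dots> = 0"
        proof (rule orth)
          define M where "M = k + a0 + n"
          have Hh: "\<forall>j\<ge>M. coeff (monom 1 k * Fs) j = 0"
            unfolding M_def Fs_def Fs by (auto simp: coeff_monom_mult coeff_rho)
          have dv: "Kp n m dvd Poly w - monom 1 k * Fs"
            using redK_dvd[of n m "monom 1 k * Fs"] unfolding Pw R2_def
            by (metis dvd_minus_iff minus_diff_eq)
          have 1: "Kp n l dvd monom 1 (M - n) * Poly (rev w) - rho M (monom 1 k * Fs)"
            by (rule rev_lemma[OF ml n wl dv Hh]) (simp add: M_def)
          have "rho M (monom 1 k * Fs) = rho ((k + 1) + (M - k) - 1) (monom 1 k * Fs)"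
            by (simp add: M_def add.assoc)
          also have "\<dots> = rho (k + 1) (monom 1 k) * rho (M - k) Fs"
            by (rule rho_mult) (use a0 in \<open>auto simp: M_def Fs_def Fs coeff_rho\<close>)
          also have "\<dots> = rho (M - k) Fs" by (simp add: rho_monom)
          also have "\<dots> = monom 1 (M - k - a0) * rho a0 Fs"
            by (rule rho_extend) (auto simp: M_def Fs_def Fs coeff_rho)
          also have "rho a0 Fs = dc fF"
            unfolding Fs_def Fs by (rule rho_rho[OF fhigh'])
          finally have "Kp n l dvd monom 1 (M - n) * Poly (rev w) - monom 1 (M - k - a0) * dc fF"
            using 1 by simp
          then obtain h where "Kp n l dvd Poly (rev w) - monom 1 (M - k - a0) * dc fF * h"
            using X_invert[OF lm n] by blast
          then obtain q where "Poly (rev w) - monom 1 (M - k - a0) * dc fF * h = Kp n l * q"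
            by (auto elim: dvdE)
          then have "Poly (rev w) = dc fF * (monom 1 (M - k - a0) * h) + q * Kp n l"
            by (simp add: algebra_simps)
          then show "rev w \<in> constacyclic_ideal n l (dc fF)"
            unfolding CI using wl by auto
        qed
        finally show ?thesis by simp
      qed
    qed
    then have "Kp n m dvd Q"
      using redK_dvd[of n m Q] unfolding r_def by simp
    then have "Kp n (Dual (inverse a) (- b * inverse a ^ 2)) dvd Poly x * dc Fsf"
      unfolding Q_def Fs_def m_def .
    from member_from_dvd[OF b' this imp]
    have "\<exists>f q. Poly x = dc gF * f + q * Kp n m" unfolding m_def by blast
    then show "x \<in> constacyclic_ideal n m (dc gF)" unfolding CI using xl by auto
  next
    fix d assume d: "d \<in> constacyclic_ideal n m (dc gF)"
    then obtain f' q where dl: "length d = n" and Pd: "Poly d = dc gF * f' + q * Kp n m"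
      unfolding CI by auto
    have "(\<Sum>k<n. d ! k * c ! k) = 0" if c: "c \<in> constacyclic_ideal n l (dc fF)" for c
    proof -
      obtain h q' where cl: "length c = n" and Pc: "Poly c = dc fF * h + q' * Kp n l"
        using c unfolding CI by auto
      define b0 where "b0 = degree h + n"
      define M where "M = a0 + b0 - 1"
      define H where "H = dc fF * h"
      have dvc: "Kp n l dvd Poly c - H" unfolding H_def Pc by simp
      have dF: "degree (dc fF) \<le> a0 - 1" using fhigh' by (intro degree_le) auto
      have "degree H \<le> a0 - 1 + degree h"
        unfolding H_def using degree_mult_le[of "dc fF" h] dF by linarith
      then have Hh: "\<forall>j\<ge>M. coeff H j = 0"
        unfolding M_def b0_def using n a0 by (intro allI impI coeff_eq_0) linarith
      have 1: "Kp n m dvd monom 1 (M - n) * Poly (rev c) - rho M H"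
        by (rule rev_lemma[OF lm n cl dvc Hh]) (use a0 in \<open>simp add: M_def b0_def\<close>)
      have "rho M H = rho a0 (dc fF) * rho b0 h"
        unfolding M_def H_def
        by (rule rho_mult[OF fhigh']) (use n a0 in \<open>auto simp: b0_def intro: coeff_eq_0\<close>)
      also have "\<dots> = dc Fsf * rho b0 h" by (simp add: Fs)
      finally have 2: "Kp n m dvd monom 1 (M - n) * Poly (rev c) - dc Fsf * rho b0 h"
        using 1 by simp
      have "monom 1 (M - n) * (Poly d * Poly (rev c))
         = Poly d * (monom 1 (M - n) * Poly (rev c) - dc Fsf * rho b0 h)
           + (Poly d - dc gF * f') * (dc Fsf * rho b0 h) + (dc gF * dc Fsf) * (f' * rho b0 h)"
        by (simp add: algebra_simps)
      also have "Kp n m dvd \<dots>"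
      proof (intro dvd_add)
        show "Kp n m dvd Poly d * (monom 1 (M - n) * Poly (rev c) - dc Fsf * rho b0 h)"
          using 2 by (rule dvd_mult)
        show "Kp n m dvd (Poly d - dc gF * f') * (dc Fsf * rho b0 h)"
          using Pd by simp
        show "Kp n m dvd dc gF * dc Fsf * (f' * rho b0 h)"
          using keyR by (rule dvd_mult2)
      qed
      finally have "Kp n m dvd Poly d * Poly (rev c)" by (rule X_cancel[OF lm n])
      then have "redK n m (Poly d * Poly (rev c)) = redK n m 0"
        by (intro redK_cong[OF n]) simp
      then have "coeff (Poly d * Poly (rev c)) (n-1) = 0"
        using redK_low[OF n pair_high[OF dl _ n, of "rev c"], of m] cl by simp
      then show ?thesis using pair_coeff[OF dl cl n] by simp
    qed
    then show "d \<in> dual_code n (constacyclic_ideal n l (dc fF))"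
      unfolding dual_code_def using dl by auto
  qed
qed

lemma CHAR_finite_field:
  fixes p m :: nat
  assumes "prime p" "card (UNIV :: 'a::{field,finite} set) = p ^ m"
  shows "CHAR('a) = p"
proof -
  have pos: "CHAR('a) > 0" by (rule finite_imp_CHAR_pos) simp
  have pr: "prime CHAR('a)" using prime_CHAR_semidom[OF pos] .
  have "CHAR('a) dvd p ^ m" using CHAR_dvd_CARD[where 'a='a] assms(2) by simp
  then have "CHAR('a) dvd p" using prime_dvd_power[OF pr] by blast
  then show ?thesis using primes_dvd_imp_eq[OF pr assms(1)] by blast
qed

lemma frob_Kp:
  fixes t :: "'a::{field,finite}"
  assumes pr: "prime CHAR('a)" and odd: "odd CHAR('a)"
  shows "(Kp d t) ^ (CHAR('a) ^ s) = Kp (d * CHAR('a) ^ s) (t ^ (CHAR('a) ^ s))"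
proof -
  have prP: "prime CHAR('a poly)" using pr by simp
  have "(Kp d t) ^ (CHAR('a) ^ s) = (monom 1 d + (- [:t:])) ^ (CHAR('a poly) ^ s)"
    unfolding Kp_def by (simp only: diff_conv_add_uminus semiring_char_poly)
  also have "\<dots> = monom 1 d ^ (CHAR('a poly) ^ s) + (- [:t:]) ^ (CHAR('a poly) ^ s)"
    by (rule freshmans_dream'[OF prP refl])
  also have "\<dots> = Kp (d * CHAR('a) ^ s) (t ^ (CHAR('a) ^ s))"
    using odd by (simp add: Kp_def monom_power const_poly_power)
  finally show ?thesis .
qed

lemma pow_deg: "degree f \<le> d \<Longrightarrow> degree (f ^ k) \<le> d * k"
  using degree_power_le[of f k] by (metis mult_right_mono order_trans zero_le)

lemma pow_high: "degree f \<le> d \<Longrightarrow> \<forall>t\<ge>d * k + 1. coeff (f ^ k) t = 0"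
proof -
  assume "degree f \<le> d"
  then have "degree (f ^ k) \<le> d * k"
    using degree_power_le[of f k] by (metis mult_right_mono order_trans zero_le)
  then show ?thesis by (auto intro!: coeff_eq_0)
qed

definition bez :: "'a::comm_ring_1 \<Rightarrow> 'a \<Rightarrow> bool" where
  "bez u v \<longleftrightarrow> (\<exists>A B. A * u + B * v = 1)"

lemma bez_sym: "bez u v \<Longrightarrow> bez v u"
  unfolding bez_def by (metis add.commute)

lemma bez_mult_right: "bez u v \<Longrightarrow> bez u w \<Longrightarrow> bez u (v * w)"
proof -
  assume "bez u v" "bez u w"
  then obtain A B A' B' where 1: "A * u + B * v = 1" and 2: "A' * u + B' * w = 1"
    unfolding bez_def by blast
  have "(A * u + B * v) * (A' * u + B' * w) = 1" using 1 2 by simp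
  then have "(A * A' * u + A * B' * w + B * v * A') * u + (B * B') * (v * w) = 1"
    by (simp add: algebra_simps)
  then show ?thesis unfolding bez_def by blast
qed

lemma bez_pow_right: "bez u v \<Longrightarrow> bez u (v ^ k)"
proof (induction k)
  case 0
  have "0 * u + 1 * 1 = 1" by simp
  then show ?case unfolding bez_def by (metis power_0)
next
  case (Suc k)
  then show ?case using bez_mult_right by (metis power_Suc)
qed

lemma bez_pow: "bez u v \<Longrightarrow> bez (u ^ k) (v ^ l)"
  using bez_pow_right bez_sym by blast

lemma bez_dvd: "bez u Y \<Longrightarrow> u dvd X * Y \<Longrightarrow> u dvd X"
proof -
  assume "bez u Y" "u dvd X * Y"
  then obtain A B where 1: "A * u + B * Y = 1" unfolding bez_def by blast
  have "X = (X * A) * u + B * (X * Y)" using 1 by (metis (no_types, lifting) distrib_left mult.commute mult.left_commute mult_1_right)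
  also have "u dvd \<dots>" by (rule dvd_add[OF dvd_triv_right dvd_mult[OF \<open>u dvd X * Y\<close>]])
  finally show ?thesis .
qed

lemma bez_prod: "bez u v \<Longrightarrow> u dvd X \<Longrightarrow> v dvd X \<Longrightarrow> u * v dvd X"
proof -
  assume "bez u v" "u dvd X" "v dvd X"
  then obtain A B where 1: "A * u + B * v = 1" unfolding bez_def by blast
  obtain s where s: "X = u * s" using \<open>u dvd X\<close> by (auto elim: dvdE)
  obtain t where t: "X = v * t" using \<open>v dvd X\<close> by (auto elim: dvdE)
  have "X = A * (u * v * t) + B * (u * v * s)"
  proof -
    have "X = (A * u + B * v) * X" using 1 by simp
    also have "\<dots> = A * (u * X) + B * (v * X)" by (simp add: algebra_simps)
    also have "\<dots> = A * (u * v * t) + B * (u * v * s)"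
      by (subst (1) t, subst s) (simp add: mult_ac)
    finally show ?thesis .
  qed
  also have "u * v dvd \<dots>" by (rule dvd_add[OF dvd_mult[OF dvd_triv_left] dvd_mult[OF dvd_triv_left]])
  finally show ?thesis .
qed

lemma rho3: "rho 3 [:x, y, z:] = [:z, y, x:]"
proof (rule poly_eqI)
  fix j
  show "coeff (rho 3 [:x, y, z:]) j = coeff [:z, y, x:] j"
    by (cases "j = 0"; cases "j = 1"; cases "j = 2")
       (auto simp: coeff_rho coeff_pCons numeral_3_eq_3 numeral_2_eq_2 split: nat.split)
qed

lemma rho_pow:
  assumes f: "\<forall>j>d. coeff f j = 0"
  shows "rho (d * k + 1) (f ^ k) = (rho (d + 1) f) ^ k"
proof (induction k)
  case 0
  show ?case by (rule poly_eqI) (simp add: coeff_rho)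
next
  case (Suc k)
  have df: "degree f \<le> d" using f by (intro degree_le) auto
  have "degree (f ^ k) \<le> d * k"
    using degree_power_le[of f k] df by (metis mult.commute mult_right_mono order_trans zero_le)
  then have hk: "\<forall>j\<ge>d * k + 1. coeff (f ^ k) j = 0" by (auto intro: coeff_eq_0)
  have "rho (d * Suc k + 1) (f ^ Suc k) = rho ((d + 1) + (d * k + 1) - 1) (f * f ^ k)"
    by (simp add: algebra_simps)
  also have "\<dots> = rho (d + 1) f * rho (d * k + 1) (f ^ k)"
    by (rule rho_mult) (use f hk in auto)
  finally show ?case using Suc by simp
qed


theorem theorem3p7:
  fixes p m s i j :: nat
    and \<alpha> \<alpha>0 \<beta> \<gamma> :: "'a::{field, finite}"
  assumes "prime p" and "odd p" and "m > 0" and "s > 0"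
    and "card (UNIV :: 'a set) = p ^ m"
    and "p ^ m mod 4 = 3"
    and "\<alpha> \<noteq> 0" and "\<not> (\<exists>y. y ^ 2 = \<alpha>)"
    and "\<alpha>0 ^ (p ^ s) = \<alpha>"
    and "\<gamma> ^ 4 + 4 * \<alpha>0 = 0"
    and "\<beta> \<noteq> 0"
    and "i \<le> 2 * p ^ s" and "j \<le> 2 * p ^ s"
  shows
    "dual_code (4 * p ^ s)
       (constacyclic_ideal (4 * p ^ s) (dconst \<alpha> + dconst \<beta> * uu)
          ([:dconst (\<gamma> ^ 2 / 2), dconst \<gamma>, 1:] ^ i *
           [:dconst (\<gamma> ^ 2 / 2), dconst (- \<gamma>), 1:] ^ j))
     = constacyclic_ideal (4 * p ^ s) (dinv (dconst \<alpha> + dconst \<beta> * uu))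
          ([:dconst (2 / \<gamma> ^ 2), dconst (2 * inverse \<gamma>), 1:] ^ (2 * p ^ s - i) *
           [:dconst (2 / \<gamma> ^ 2), dconst (- 2 * inverse \<gamma>), 1:] ^ (2 * p ^ s - j))"
proof -
  define N where "N = 2 * p ^ s"
  define f1 where "f1 = [:\<gamma> ^ 2 / 2, \<gamma>, 1:]"
  define f2 where "f2 = [:\<gamma> ^ 2 / 2, - \<gamma>, 1:]"
  define g1 where "g1 = [:2 / \<gamma> ^ 2, 2 * inverse \<gamma>, 1:]"
  define g2 where "g2 = [:2 / \<gamma> ^ 2, - 2 * inverse \<gamma>, 1:]"
  have charp: "CHAR('a) = p" by (rule CHAR_finite_field[OF assms(1) assms(5)])
  have two: "(2::'a) \<noteq> 0"
  proof
    assume "(2::'a) = 0"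
    then have "of_nat 2 = (0::'a)" by simp
    then have "p dvd 2" using charp of_nat_eq_0_iff_char_dvd by metis
    then have "p \<le> 2" by (simp add: dvd_imp_le)
    moreover have "p \<ge> 2" using assms(1) prime_ge_2_nat by blast
    ultimately show False using assms(2) by simp
  qed
  have four: "(4::'a) \<noteq> 0" using two by (metis mult_eq_0_iff numeral_Bit0 one_add_one mult_2)
  have ps: "p ^ s > 0" using assms(1) prime_gt_0_nat by simp
  have a0nz: "\<alpha>0 \<noteq> 0" using assms(7,9) ps by auto
  have gnz: "\<gamma> \<noteq> 0" using assms(10) a0nz four by auto
  have g4: "\<gamma> ^ 4 = - 4 * \<alpha>0" using assms(10) by (simp add: eq_neg_iff_add_eq_0)
  have F2: "g1 * g2 = Kp 4 (inverse \<alpha>0)"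
  proof -
    have "inverse \<alpha>0 = - 4 / \<gamma> ^ 4" using g4 a0nz four by (simp add: field_simps)
    then show ?thesis using gnz two
      by (simp add: g1_def g2_def Kp_def monom_Suc monom_0 numeral_eq_Suc field_simps)
  qed
  have E: "Kp (4 * p ^ s) (inverse \<alpha>) = (g1 * g2) ^ (p ^ s)"
  proof -
    have "(Kp 4 (inverse \<alpha>0)) ^ (CHAR('a) ^ s) = Kp (4 * CHAR('a) ^ s) (inverse \<alpha>0 ^ (CHAR('a) ^ s))"
      by (rule frob_Kp) (use charp assms(1,2) in auto)
    then show ?thesis using assms(9) charp F2 by (simp add: power_inverse)
  qed
  have E2: "(Kp (4 * p ^ s) (inverse \<alpha>))^2 = g1 ^ N * g2 ^ N"
    unfolding E N_def by (simp add: power_mult_distrib flip: power_mult) (simp add: mult.commute)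
  define c0 where "c0 = (\<gamma> ^ 2 / 2) ^ (i + j)"
  have c0: "c0 \<noteq> 0" using gnz two by (simp add: c0_def)
  have g1nz: "g1 \<noteq> 0" and g2nz: "g2 \<noteq> 0" by (simp_all add: g1_def g2_def)
  have f1h: "\<forall>t>2. coeff f1 t = 0" and f2h: "\<forall>t>2. coeff f2 t = 0"
    by (auto simp: f1_def f2_def coeff_pCons split: nat.split)
  have df1: "degree f1 \<le> 2" and df2: "degree f2 \<le> 2" using f1h f2h by (auto intro: degree_le)
  have hf1: "\<forall>t\<ge>2 * i + 1. coeff (f1 ^ i) t = 0" by (rule pow_high[OF df1])
  have hf2: "\<forall>t\<ge>2 * j + 1. coeff (f2 ^ j) t = 0" by (rule pow_high[OF df2])
  have fhigh: "\<forall>t\<ge>2 * (i + j) + 1. coeff (f1 ^ i * f2 ^ j) t = 0"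
  proof -
    have "degree (f1 ^ i * f2 ^ j) \<le> 2 * i + 2 * j"
      using degree_mult_le[of "f1 ^ i" "f2 ^ j"] pow_deg[OF df1, of i] pow_deg[OF df2, of j]
      by linarith
    then show ?thesis by (auto intro!: coeff_eq_0)
  qed
  have r1: "rho 3 f1 = smult (\<gamma> ^ 2 / 2) g1" and r2: "rho 3 f2 = smult (\<gamma> ^ 2 / 2) g2"
  proof -
    have e1: "\<gamma> ^ 2 / 2 * (2 / \<gamma> ^ 2) = 1" using gnz two by (simp add: field_simps)
    have e2: "\<gamma> ^ 2 / 2 * (2 * inverse \<gamma>) = \<gamma>" using gnz two by (simp add: field_simps power2_eq_square)
    have e3: "\<gamma> ^ 2 / 2 * (- 2 * inverse \<gamma>) = - \<gamma>" using gnz two by (simp add: field_simps power2_eq_square)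
    show "rho 3 f1 = smult (\<gamma> ^ 2 / 2) g1" "rho 3 f2 = smult (\<gamma> ^ 2 / 2) g2"
      unfolding f1_def f2_def g1_def g2_def rho3 by (simp_all only: smult_pCons e1 e2 e3 smult_0_right mult_1_right)
  qed
  have F1: "rho (2 * (i + j) + 1) (f1 ^ i * f2 ^ j) = smult c0 (g1 ^ i * g2 ^ j)"
  proof -
    have "rho (2 * (i + j) + 1) (f1 ^ i * f2 ^ j) = rho ((2 * i + 1) + (2 * j + 1) - 1) (f1 ^ i * f2 ^ j)"
      by (simp add: algebra_simps)
    also have "\<dots> = rho (2 * i + 1) (f1 ^ i) * rho (2 * j + 1) (f2 ^ j)"
      by (rule rho_mult[OF hf1 hf2]) auto
    also have "rho (2 * i + 1) (f1 ^ i) = (rho (2 + 1) f1) ^ i" by (rule rho_pow[OF f1h])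
    also have "rho (2 * j + 1) (f2 ^ j) = (rho (2 + 1) f2) ^ j" by (rule rho_pow[OF f2h])
    finally show ?thesis using r1 r2 by (simp add: c0_def smult_power power_add mult_ac)
  qed
  have cop: "bez g1 g2"
  proof -
    define X where "X = [:2 / \<gamma>, 1:]"
    have id: "smult (\<gamma> ^ 2 / 2) (g1 - smult (\<gamma> / 4) (g1 - g2) * X) = 1"
    proof -
      have "g1 - g2 = [:0, 4 / \<gamma>:]" unfolding g1_def g2_def
        by (simp add: field_simps)
      then have "smult (\<gamma> / 4) (g1 - g2) = [:0, 1:]" using gnz four by simp
      then have "g1 - smult (\<gamma> / 4) (g1 - g2) * X = [:2 / \<gamma> ^ 2:]"
        unfolding g1_def X_def by (simp add: field_simps)
      then show ?thesis using gnz two by (simp add: one_pCons)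
    qed
    have "smult (\<gamma> ^ 2 / 2) (g1 - smult (\<gamma> / 4) (g1 - g2) * X)
       = smult (\<gamma> ^ 2 / 2) (1 - smult (\<gamma> / 4) X) * g1 + smult (\<gamma> ^ 2 / 2) (smult (\<gamma> / 4) X) * g2"
      by (simp add: algebra_simps smult_diff_right smult_add_right)
    then show ?thesis using id unfolding bez_def by metis
  qed
  have iN: "i \<le> N" and jN: "j \<le> N" using assms(12,13) by (simp_all add: N_def)
  have gprod: "g1 ^ (N - i) * g2 ^ (N - j) * (g1 ^ i * g2 ^ j) = g1 ^ N * g2 ^ N"
  proof -
    have "g1 ^ (N - i) * g2 ^ (N - j) * (g1 ^ i * g2 ^ j) = g1 ^ (N - i + i) * g2 ^ (N - j + j)"
      by (simp add: power_add mult_ac)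
    then show ?thesis using iN jN by simp
  qed
  have key: "(Kp (4 * p ^ s) (inverse \<alpha>))^2 dvd g1 ^ (N - i) * g2 ^ (N - j) * smult c0 (g1 ^ i * g2 ^ j)"
    unfolding E2 mult_smult_right gprod by (rule dvd_smult) simp
  have imp: "g1 ^ (N - i) * g2 ^ (N - j) dvd Pf"
    if h: "(Kp (4 * p ^ s) (inverse \<alpha>))^2 dvd Pf * smult c0 (g1 ^ i * g2 ^ j)" for Pf
  proof -
    have h1: "g1 ^ N * g2 ^ N dvd Pf * (g1 ^ i * g2 ^ j)"
      using h c0 unfolding E2 mult_smult_right by (simp add: dvd_smult_iff)
    have "g1 ^ (N - i) * g1 ^ i dvd (Pf * g2 ^ j) * g1 ^ i"
    proof -
      have "g1 ^ (N - i) * g1 ^ i = g1 ^ N" using iN by (simp flip: power_add)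
      moreover have "g1 ^ N dvd g1 ^ N * g2 ^ N" by simp
      ultimately show ?thesis using h1 by (metis dvd_trans mult.assoc mult.commute)
    qed
    then have "g1 ^ (N - i) dvd Pf * g2 ^ j" using g1nz by simp
    then have d1: "g1 ^ (N - i) dvd Pf"
      using bez_dvd bez_pow[OF cop] by blast
    have "g2 ^ (N - j) * g2 ^ j dvd (Pf * g1 ^ i) * g2 ^ j"
    proof -
      have "g2 ^ (N - j) * g2 ^ j = g2 ^ N" using jN by (simp flip: power_add)
      moreover have "g2 ^ N dvd g1 ^ N * g2 ^ N" by simp
      ultimately show ?thesis using h1 by (metis dvd_trans mult.assoc mult.commute)
    qed
    then have "g2 ^ (N - j) dvd Pf * g1 ^ i" using g2nz by simp
    then have d2: "g2 ^ (N - j) dvd Pf"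
      using bez_dvd bez_pow[OF bez_sym[OF cop]] by blast
    show ?thesis using d1 d2 bez_pow[OF cop] by (intro bez_prod) simp_all
  qed
  have genf: "[:dconst (\<gamma> ^ 2 / 2), dconst \<gamma>, 1:] ^ i * [:dconst (\<gamma> ^ 2 / 2), dconst (- \<gamma>), 1:] ^ j
      = dc (f1 ^ i * f2 ^ j)"
    by (simp add: f1_def f2_def dc_mult dc_power dc_pCons)
  have geng: "[:dconst (2 / \<gamma> ^ 2), dconst (2 * inverse \<gamma>), 1:] ^ (2 * p ^ s - i) *
           [:dconst (2 / \<gamma> ^ 2), dconst (- 2 * inverse \<gamma>), 1:] ^ (2 * p ^ s - j)
      = dc (g1 ^ (N - i) * g2 ^ (N - j))"
    by (simp add: g1_def g2_def N_def dc_mult dc_power dc_pCons)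
  have lam: "dconst \<alpha> + dconst \<beta> * uu = Dual \<alpha> \<beta>" by (simp add: dual_eq_iff)
  have mu: "dinv (Dual \<alpha> \<beta>) = Dual (inverse \<alpha>) (- \<beta> * inverse \<alpha> ^ 2)" by (simp add: dinv_def)
  show ?thesis unfolding genf geng lam mu
    by (rule abstract_dual[OF _ assms(7) assms(11) _ fhigh F1[symmetric] key imp]) (use ps in simp_all)
qed
end
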